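(* Let $K$ be a number field and let $E\subset\mathbb{P}^2$ be the elliptic curve given by the Weierstrass equation $y^2=x^3+ax+b$ with $a,b\in K$, $4a^3+27b^2\neq0$. Let $h(t)\in K[t]$ be a polynomial of degree at least $2$, put $H(t)=h(t)+ah(t)^3+bh(t)^4\in K[t]$, and let $C$ be the projective curve defined by $s^2=H(t)$. Assume that $C$ is smooth (for example when $H(t)$ is separable). Then there exists a non-constant morphism of algebraic curves $\phi:C\to E$.
   Context: For $H\in K[t]$ of degree $n=2g+1>4$ or $n=2g+2>4$, the projective curve defined by $s^2=H(t)$ is obtained by gluing the affine curves $s^2=H(t)$ and $s'^2=t'^{2g+2}H(1/t')$ along $t\neq0$, $t'\neq0$ via $t'=1/t$, $s'=t^{-g-1}s$. When $H$ is separable it is a smooth projective hyperelliptic curve of genus $g\geq2$, with a double cover $\gamma:C\to\mathbb{P}^1$, $(s,t)\mapsto t$. *)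

theory Defs
  imports Complex_Main "HOL-Computational_Algebra.Polynomial"
begin

text \<open>A number field, realised (via a fixed embedding) as a subfield of the complex
numbers that is finite-dimensional over the rationals.\<close>
definition number_field :: "complex set \<Rightarrow> bool" where
  "number_field K \<longleftrightarrow>
     0 \<in> K \<and> 1 \<in> K \<and>
     (\<forall>x\<in>K. \<forall>y\<in>K. x + y \<in> K \<and> x * y \<in> K) \<and>
     (\<forall>x\<in>K. - x \<in> K) \<and> (\<forall>x\<in>K. x \<noteq> 0 \<longrightarrow> inverse x \<in> K) \<and>
     (\<exists>B. finite B \<and> B \<subseteq> K \<and>
        (\<forall>x\<in>K. \<exists>c :: complex \<Rightarrow> rat. x = (\<Sum>v\<in>B. of_rat (c v) * v)))"

definition Kpoly :: "complex set \<Rightarrow> complex poly \<Rightarrow> bool" where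
  "Kpoly K p \<longleftrightarrow> (\<forall>i. coeff p i \<in> K)"

text \<open>Hyperelliptic curve s^2 = H(t): genus-type data, second chart polynomial
  t'^(2g+2) H(1/t').\<close>
definition hyp_g :: "complex poly \<Rightarrow> nat" where
  "hyp_g H = (degree H - 1) div 2"

definition hyp_H2 :: "complex poly \<Rightarrow> complex poly" where
  "hyp_H2 H = monom 1 (2 * hyp_g H + 2 - degree H) * reflect_poly H"

text \<open>Affine curve s^2 = F(t) (complex points, i.e. points over an algebraic closure).\<close>
definition aff_curve :: "complex poly \<Rightarrow> (complex \<times> complex) set" where
  "aff_curve F = {(s, t). s ^ 2 = poly F t}"

text \<open>Points of the projective curve: affine points of the first chart (Inl (s,t)),
  and the points of the second chart with t' = 0 (Inr s').\<close>
type_synonym cpoint = "(complex \<times> complex) + complex"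

definition Cpts :: "complex poly \<Rightarrow> cpoint set" where
  "Cpts H = Inl ` aff_curve H \<union> Inr ` {s. s ^ 2 = poly (hyp_H2 H) 0}"

definition chart1 :: "complex \<times> complex \<Rightarrow> cpoint" where
  "chart1 z = Inl z"

definition chart2 :: "complex poly \<Rightarrow> complex \<times> complex \<Rightarrow> cpoint" where
  "chart2 H z = (if snd z = 0 then Inr (fst z)
                 else Inl (fst z / snd z ^ (hyp_g H + 1), 1 / snd z))"

definition hyp_smooth :: "complex poly \<Rightarrow> bool" where
  "hyp_smooth H \<longleftrightarrow>
     (\<forall>(s, t)\<in>aff_curve H. \<not> (2 * s = 0 \<and> poly (pderiv H) t = 0)) \<and>
     (\<forall>(s, t)\<in>aff_curve (hyp_H2 H). \<not> (2 * s = 0 \<and> poly (pderiv (hyp_H2 H)) t = 0))"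

text \<open>Elements p(t) + s q(t) of the coordinate ring K[s,t]/(s^2 - F(t)).\<close>
definition ev :: "complex poly \<times> complex poly \<Rightarrow> complex \<times> complex \<Rightarrow> complex" where
  "ev g z = poly (fst g) (snd z) + fst z * poly (snd g) (snd z)"

definition Kcoord :: "complex set \<Rightarrow> complex poly \<times> complex poly \<Rightarrow> bool" where
  "Kcoord K g \<longleftrightarrow> Kpoly K (fst g) \<and> Kpoly K (snd g)"

definition proj_eq :: "complex \<times> complex \<times> complex \<Rightarrow> complex \<times> complex \<times> complex \<Rightarrow> bool" where
  "proj_eq v w \<longleftrightarrow> v \<noteq> (0, 0, 0) \<and>
     (\<exists>c. c \<noteq> 0 \<and> w = (c * fst v, c * fst (snd v), c * snd (snd v)))"

definition on_E :: "complex \<Rightarrow> complex \<Rightarrow> complex \<times> complex \<times> complex \<Rightarrow> bool" where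
  "on_E a b v \<longleftrightarrow> v \<noteq> (0, 0, 0) \<and>
     (case v of (X, Y, Z) \<Rightarrow> Y ^ 2 * Z = X ^ 3 + a * X * Z ^ 2 + b * Z ^ 3)"

definition local_rep ::
  "complex set \<Rightarrow> complex poly \<Rightarrow> (complex \<times> complex \<Rightarrow> cpoint) \<Rightarrow>
   (cpoint \<Rightarrow> complex \<times> complex \<times> complex) \<Rightarrow> cpoint \<Rightarrow> bool" where
  "local_rep K F chart phi P \<longleftrightarrow>
     (\<exists>z0\<in>aff_curve F. chart z0 = P \<and>
        (\<exists>g0 g1 g2. Kcoord K g0 \<and> Kcoord K g1 \<and> Kcoord K g2 \<and>
           (ev g0 z0, ev g1 z0, ev g2 z0) \<noteq> (0, 0, 0) \<and>
           (\<forall>z\<in>aff_curve F. (ev g0 z, ev g1 z, ev g2 z) \<noteq> (0, 0, 0) \<longrightarrow>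
               proj_eq (ev g0 z, ev g1 z, ev g2 z) (phi (chart z)))))"

definition is_morphism_C_E ::
  "complex set \<Rightarrow> complex \<Rightarrow> complex \<Rightarrow> complex poly \<Rightarrow>
   (cpoint \<Rightarrow> complex \<times> complex \<times> complex) \<Rightarrow> bool" where
  "is_morphism_C_E K a b H phi \<longleftrightarrow>
     (\<forall>P\<in>Cpts H. on_E a b (phi P) \<and>
        (local_rep K H chart1 phi P \<or> local_rep K (hyp_H2 H) (chart2 H) phi P))"

definition nonconstant_on :: "cpoint set \<Rightarrow> (cpoint \<Rightarrow> complex \<times> complex \<times> complex) \<Rightarrow> bool" where
  "nonconstant_on S phi \<longleftrightarrow> (\<exists>P\<in>S. \<exists>Q\<in>S. \<not> proj_eq (phi P) (phi Q))"

end

theory Submission imports Defs "HOL-Computational_Algebra.Fundamental_Theorem_Algebra" begin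

lemma K_sum:
  assumes "number_field K" "\<And>i. i \<in> A \<Longrightarrow> f i \<in> K"
  shows "sum f A \<in> K"
  using assms(2)
proof (induction A rule: infinite_finite_induct)
  case (infinite A) then show ?case using assms(1) by (simp add: number_field_def)
next
  case empty then show ?case using assms(1) by (simp add: number_field_def)
next
  case (insert x F) then show ?case using assms(1) by (simp add: number_field_def)
qed

lemma Kpoly_add: "number_field K \<Longrightarrow> Kpoly K p \<Longrightarrow> Kpoly K q \<Longrightarrow> Kpoly K (p + q)"
  by (simp add: Kpoly_def number_field_def)

lemma Kpoly_mult: "number_field K \<Longrightarrow> Kpoly K p \<Longrightarrow> Kpoly K q \<Longrightarrow> Kpoly K (p * q)"
  unfolding Kpoly_def coeff_mult
  by (intro allI K_sum) (auto simp: number_field_def)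

lemma Kpoly_smult: "number_field K \<Longrightarrow> c \<in> K \<Longrightarrow> Kpoly K p \<Longrightarrow> Kpoly K (smult c p)"
  by (simp add: Kpoly_def number_field_def)

lemma Kpoly_0: "number_field K \<Longrightarrow> Kpoly K 0"
  by (simp add: Kpoly_def number_field_def)

lemma Kpoly_1: "number_field K \<Longrightarrow> Kpoly K 1"
  by (simp add: Kpoly_def number_field_def coeff_1)

lemma Kpoly_monom: "number_field K \<Longrightarrow> Kpoly K (monom 1 n)"
  by (simp add: Kpoly_def number_field_def coeff_monom)

lemma Kpoly_power: "number_field K \<Longrightarrow> Kpoly K p \<Longrightarrow> Kpoly K (p ^ n)"
  by (induction n) (auto intro: Kpoly_mult Kpoly_1)

lemma Kpoly_reflect: "number_field K \<Longrightarrow> Kpoly K p \<Longrightarrow> Kpoly K (reflect_poly p)"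
  by (simp add: Kpoly_def number_field_def coeff_reflect_poly)

lemma root_exists: "degree (p::complex poly) > 0 \<Longrightarrow> \<exists>z. poly p z = 0"
  by (metis fundamental_theorem_of_algebra constant_degree neq0_conv)

definition phiE :: "complex poly \<Rightarrow> nat \<Rightarrow> cpoint \<Rightarrow> complex \<times> complex \<times> complex" where
  "phiE h e P = (case P of Inl z \<Rightarrow>
      (if poly h (snd z) = 0 then (0, 1, 0) else (poly h (snd z), fst z, poly h (snd z) ^ 2))
    | Inr s' \<Rightarrow> (0, s' * 0 ^ e, lead_coeff h ^ 2))"

lemma ev_simp: "ev (p, q) (s, t) = poly p t + s * poly q t"
  by (simp add: ev_def)

lemma proj_eqI: "v \<noteq> (0,0,0) \<Longrightarrow> c \<noteq> 0 \<Longrightarrow> w = (c * fst v, c * fst (snd v), c * snd (snd v)) \<Longrightarrow> proj_eq v w"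
  unfolding proj_eq_def by blast

lemma local_repI:
  assumes "zp \<in> aff_curve F" "chart zp = P" "Kcoord K ga" "Kcoord K gb" "Kcoord K gc"
    "(ev ga zp, ev gb zp, ev gc zp) \<noteq> (0, 0, 0)"
    "\<And>z. z \<in> aff_curve F \<Longrightarrow> (ev ga z, ev gb z, ev gc z) \<noteq> (0, 0, 0) \<Longrightarrow>
       proj_eq (ev ga z, ev gb z, ev gc z) (phi (chart z))"
  shows "local_rep K F chart phi P"
  unfolding local_rep_def using assms by blast

theorem lemma3p6:
  fixes K :: "complex set" and a b :: complex and h H :: "complex poly"
  assumes "number_field K"
    and "a \<in> K" and "b \<in> K"
    and "4 * a ^ 3 + 27 * b ^ 2 \<noteq> 0"
    and "Kpoly K h" and "degree h \<ge> 2"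
    and "H = h + smult a (h ^ 3) + smult b (h ^ 4)"
    and "hyp_smooth H"
  shows "\<exists>phi. is_morphism_C_E K a b H phi \<and> nonconstant_on (Cpts H) phi"
proof -
  note nf = assms(1)
  define d where "d = degree h"
  define n where "n = degree H"
  define g where "g = hyp_g H"
  define e where "e = 2 * d - (g + 1)"
  define u where "u = 1 + smult a (h ^ 2) + smult b (h ^ 3)"
  define lc where "lc = lead_coeff h"
  have hne: "h \<noteq> 0" using assms(6) by auto
  have lcne: "lc \<noteq> 0" using hne by (simp add: lc_def)
  have Hhu: "H = h * u" unfolding assms(7) u_def by (simp add: algebra_simps power3_eq_cube power4_eq_xxxx power2_eq_square)
  have degH: "n \<le> 4 * d"
  proof -
    have "degree (h ^ 3) \<le> 3 * d" "degree (h ^ 4) \<le> 4 * d"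
      using degree_power_le[of h 3] degree_power_le[of h 4] by (simp_all add: d_def mult.commute)
    moreover have "degree h \<le> 4 * d" by (simp add: d_def)
    ultimately show ?thesis unfolding n_def assms(7)
      using degree_smult_le[of a "h ^ 3"] degree_smult_le[of b "h ^ 4"]
      by (intro degree_add_le) linarith+
  qed
  have dge: "d \<ge> 2" using assms(6) d_def by simp
  have g_def': "g = (n - 1) div 2" by (simp add: g_def n_def hyp_g_def)
  have g2d: "g + 1 \<le> 2 * d" using degH dge unfolding g_def' by linarith
  have eg: "g + 1 + e = 2 * d" using g2d e_def by simp
  have gn: "n \<le> 2 * g + 2" unfolding g_def' by linarith
  have H2_def': "hyp_H2 H = monom 1 (2 * g + 2 - n) * reflect_poly H"
    by (simp add: hyp_H2_def g_def n_def)
  have polyH2: "poly (hyp_H2 H) x = x ^ (2 * g + 2) * poly H (1 / x)" if "x \<noteq> 0" for x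
  proof -
    have "poly (hyp_H2 H) x = x ^ (2 * g + 2 - n) * (x ^ n * poly H (inverse x))"
      unfolding H2_def' using that by (simp add: poly_monom poly_reflect_poly_nz n_def)
    also have "\<dots> = x ^ (2 * g + 2) * poly H (1 / x)"
      using gn by (simp add: power_add[symmetric] inverse_eq_divide)
    finally show ?thesis .
  qed
  have polyH2_0: "poly (hyp_H2 H) 0 = 0 ^ (2 * g + 2 - n) * coeff H n"
    unfolding H2_def' by (simp add: poly_monom n_def)
  have onE_inf: "on_E a b (0, s' * 0 ^ e, lc ^ 2)" if "s' ^ 2 = poly (hyp_H2 H) 0" for s'
  proof (cases "b = 0")
    case True
    have "degree (h ^ 3) \<le> 3 * d"
      using degree_power_le[of h 3] by (simp add: d_def mult.commute)
    then have "degree (h + smult a (h ^ 3)) \<le> 3 * d"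
      using degree_smult_le[of a "h ^ 3"] by (intro degree_add_le) (simp_all add: d_def)
    then have "n \<le> 3 * d" using True by (simp add: n_def assms(7))
    then have "e \<noteq> 0" using dge unfolding e_def g_def' by linarith
    then show ?thesis using True lcne by (simp add: on_E_def)
  next
    case False
    have c3: "coeff (h ^ 3) (4 * d) = 0"
      using degree_power_le[of h 3] dge by (intro coeff_eq_0) (simp add: d_def mult.commute)
    have c1: "coeff h (4 * d) = 0" using dge by (intro coeff_eq_0) (simp add: d_def)
    have c4: "coeff (h ^ 4) (4 * d) = lc ^ 4"
      by (metis d_def lc_def lead_coeff_power degree_power_eq hne mult.commute)
    have cH: "coeff H (4 * d) = b * lc ^ 4" unfolding assms(7) using c1 c3 c4 by simp
    then have "coeff H (4 * d) \<noteq> 0" using False lcne by simp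
    then have "4 * d \<le> n" unfolding n_def by (rule le_degree)
    then have nn: "n = 4 * d" using degH by simp
    then have "g = 2 * d - 1" unfolding g_def' by linarith
    then have "e = 0" "2 * g + 2 - n = 0" using nn dge unfolding e_def by auto
    then have e0: "e = 0" and sq: "s' ^ 2 = b * lc ^ 4" using that polyH2_0 cH nn by auto
    have "(s' * 0 ^ e) ^ 2 * lc ^ 2 = 0 ^ 3 + a * 0 * (lc ^ 2) ^ 2 + b * (lc ^ 2) ^ 3"
      using sq e0 by (simp add: power_mult_distrib)
    then show ?thesis using lcne by (simp add: on_E_def)
  qed
  define phi where "phi = phiE h e"
  have Hpoly: "poly H t = poly h t * poly u t" for t using Hhu by simp
  have Hexp: "poly H t = poly h t + a * poly h t ^ 3 + b * poly h t ^ 4" for t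
    unfolding assms(7) by simp
  have Ku: "Kpoly K u" unfolding u_def
    by (intro Kpoly_add Kpoly_smult Kpoly_power Kpoly_1 nf assms(2,3,5))
  have Kh2: "Kpoly K (h ^ 2)" by (intro Kpoly_power nf assms(5))
  have K0: "Kpoly K 0" by (rule Kpoly_0[OF nf])
  have K1: "Kpoly K 1" by (rule Kpoly_1[OF nf])
  have Kr: "Kpoly K (reflect_poly h)" by (intro Kpoly_reflect nf assms(5))
  have Kg0: "Kpoly K (monom 1 d * reflect_poly h)" by (intro Kpoly_mult Kpoly_monom nf Kr)
  have Kr2: "Kpoly K (reflect_poly h ^ 2)" by (intro Kpoly_power nf Kr)
  have Km: "Kpoly K (monom 1 e)" by (intro Kpoly_monom nf)
  have morph: "is_morphism_C_E K a b H phi"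
    unfolding is_morphism_C_E_def
  proof
    fix P assume "P \<in> Cpts H"
    then consider s t where "P = Inl (s, t)" "s ^ 2 = poly H t"
      | s' where "P = Inr s'" "s' ^ 2 = poly (hyp_H2 H) 0"
      unfolding Cpts_def aff_curve_def by auto
    then show "on_E a b (phi P) \<and> (local_rep K H chart1 phi P \<or> local_rep K (hyp_H2 H) (chart2 H) phi P)"
    proof cases
      case (1 s t)
      have onE: "on_E a b (phi P)"
      proof (cases "poly h t = 0")
        case True then show ?thesis using 1 by (simp add: phi_def phiE_def on_E_def)
      next
        case False
        have "s ^ 2 * (poly h t) ^ 2 = poly h t ^ 3 + a * poly h t * (poly h t ^ 2) ^ 2 + b * (poly h t ^ 2) ^ 3"
          using 1 Hexp[of t] by (simp add: algebra_simps power2_eq_square power3_eq_cube power4_eq_xxxx)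
        then show ?thesis using 1 False by (simp add: phi_def phiE_def on_E_def)
      qed
      have rep: "local_rep K H chart1 phi P"
      proof (cases "poly h t = 0")
        case False
        show ?thesis
        proof (rule local_repI[where zp="(s, t)" and ga="(h, 0)" and gb="(0, 1)" and gc="(h ^ 2, 0)"])
          show "(s, t) \<in> aff_curve H" using 1 by (simp add: aff_curve_def)
          show "chart1 (s, t) = P" using 1 by (simp add: chart1_def)
          show "Kcoord K (h, 0)" "Kcoord K (0, 1)" "Kcoord K (h ^ 2, 0)"
            using assms(5) K0 K1 Kh2 by (simp_all add: Kcoord_def)
        next
          show "(ev (h, 0) (s, t), ev (0, 1) (s, t), ev (h ^ 2, 0) (s, t)) \<noteq> (0, 0, 0)"
            using False by (simp add: ev_simp)
        next
          fix z assume z: "z \<in> aff_curve H"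
            assume nz: "(ev (h, 0) z, ev (0, 1) z, ev (h ^ 2, 0) z) \<noteq> (0, 0, 0)"
          obtain s1 t1 where zz: "z = (s1, t1)" by fastforce
          have s1sq: "s1 ^ 2 = poly h t1 * poly u t1" using z zz Hpoly by (simp add: aff_curve_def)
          have "poly h t1 \<noteq> 0" using nz s1sq by (auto simp: zz ev_simp)
          then show "proj_eq (ev (h, 0) z, ev (0, 1) z, ev (h ^ 2, 0) z) (phi (chart1 z))"
            using nz by (intro proj_eqI[where c=1]) (simp_all add: zz ev_simp phi_def phiE_def chart1_def)
        qed
      next
        case True
        show ?thesis
        proof (rule local_repI[where zp="(s, t)" and ga="(0, 1)" and gb="(u, 0)" and gc="(0, h)"])
          show "(s, t) \<in> aff_curve H" using 1 by (simp add: aff_curve_def)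
          show "chart1 (s, t) = P" using 1 by (simp add: chart1_def)
          show "Kcoord K (0, 1)" "Kcoord K (u, 0)" "Kcoord K (0, h)"
            using assms(5) K0 K1 Ku by (simp_all add: Kcoord_def)
        next
          show "(ev (0, 1) (s, t), ev (u, 0) (s, t), ev (0, h) (s, t)) \<noteq> (0, 0, 0)"
            using True by (simp add: ev_simp u_def)
        next
          fix z assume z: "z \<in> aff_curve H"
            assume nz: "(ev (0, 1) z, ev (u, 0) z, ev (0, h) z) \<noteq> (0, 0, 0)"
          obtain s1 t1 where zz: "z = (s1, t1)" by fastforce
          have s1sq: "s1 ^ 2 = poly h t1 * poly u t1" using z zz Hpoly by (simp add: aff_curve_def)
          show "proj_eq (ev (0, 1) z, ev (u, 0) z, ev (0, h) z) (phi (chart1 z))"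
          proof (cases "poly h t1 = 0")
            case True
            then have "s1 = 0" using s1sq by simp
            then show ?thesis using True nz
              by (intro proj_eqI[where c=1]) (simp_all add: zz ev_simp phi_def phiE_def chart1_def u_def)
          next
            case False
            have "s1 \<noteq> 0" using nz s1sq False by (auto simp: zz ev_simp)
            show ?thesis
            proof (rule proj_eqI[where c="poly h t1 / s1"])
              show "poly h t1 / s1 \<noteq> 0" using False \<open>s1 \<noteq> 0\<close> by simp
              have "poly h t1 / s1 * poly u t1 = s1" using s1sq \<open>s1 \<noteq> 0\<close>
                by (simp add: field_simps power2_eq_square)
              then show "phi (chart1 z) = (poly h t1 / s1 * fst (ev (0, 1) z, ev (u, 0) z, ev (0, h) z),
                  poly h t1 / s1 * fst (snd (ev (0, 1) z, ev (u, 0) z, ev (0, h) z)),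
                  poly h t1 / s1 * snd (snd (ev (0, 1) z, ev (u, 0) z, ev (0, h) z)))"
                using False \<open>s1 \<noteq> 0\<close>
                by (simp add: zz ev_simp phi_def phiE_def chart1_def power2_eq_square)
            qed (use nz in simp)
          qed
        qed
      qed
      show ?thesis using onE rep by blast
    next
      case (2 s')
      have onE: "on_E a b (phi P)" using onE_inf[OF 2(2)] 2(1) by (simp add: phi_def phiE_def lc_def)
      have d0: "(0::complex) ^ d = 0" using dge by simp
      have rep: "local_rep K (hyp_H2 H) (chart2 H) phi P"
      proof (rule local_repI[where zp="(s', 0)" and ga="(monom 1 d * reflect_poly h, 0)" and gb="(0, monom 1 e)" and gc="(reflect_poly h ^ 2, 0)"])
        show "(s', 0) \<in> aff_curve (hyp_H2 H)" using 2 by (simp add: aff_curve_def)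
        show "chart2 H (s', 0) = P" using 2 by (simp add: chart2_def)
        show "Kcoord K (monom 1 d * reflect_poly h, 0)" "Kcoord K (0, monom 1 e)" "Kcoord K (reflect_poly h ^ 2, 0)"
          using Kg0 K0 Km Kr2 by (simp_all add: Kcoord_def)
      next
        show "(ev (monom 1 d * reflect_poly h, 0) (s', 0), ev (0, monom 1 e) (s', 0), ev (reflect_poly h ^ 2, 0) (s', 0)) \<noteq> (0, 0, 0)"
          using lcne by (simp add: ev_simp lc_def)
      next
        fix z assume z: "z \<in> aff_curve (hyp_H2 H)"
        assume nz: "(ev (monom 1 d * reflect_poly h, 0) z, ev (0, monom 1 e) z, ev (reflect_poly h ^ 2, 0) z) \<noteq> (0, 0, 0)"
        obtain s1 t1 where zz: "z = (s1, t1)" by fastforce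
        have s1sq: "s1 ^ 2 = poly (hyp_H2 H) t1" using z zz by (simp add: aff_curve_def)
        show "proj_eq (ev (monom 1 d * reflect_poly h, 0) z, ev (0, monom 1 e) z, ev (reflect_poly h ^ 2, 0) z) (phi (chart2 H z))"
        proof (cases "t1 = 0")
          case True
          show ?thesis using nz True d0
            by (intro proj_eqI[where c=1]) (simp_all add: zz ev_simp phi_def phiE_def chart2_def lc_def poly_monom)
        next
          case False
          define t where "t = 1 / t1"
          define s where "s = s1 / t1 ^ (g + 1)"
          have ch: "chart2 H (s1, t1) = Inl (s, t)" using False by (simp add: chart2_def zz s_def t_def g_def)
          have refl: "poly (reflect_poly h) t1 = t1 ^ d * poly h t"
            using False by (simp add: poly_reflect_poly_nz d_def t_def inverse_eq_divide)
          have "s1 ^ 2 = t1 ^ (2 * g + 2) * poly H t" using s1sq polyH2[OF False] by (simp add: t_def)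
          moreover have "t1 ^ (g * 2) = t1 ^ g * t1 ^ g" by (simp add: mult_2_right power_add)
          ultimately have ssq: "s ^ 2 = poly h t * poly u t" using False
            by (simp add: s_def Hpoly power_divide power_mult[symmetric] field_simps mult.commute power2_eq_square)
          have pw: "t1 ^ (2 * d) = t1 ^ (g + 1) * t1 ^ e" by (simp add: eg[symmetric] power_add)
          have s1s: "s1 * t1 ^ e = t1 ^ (2 * d) * s"
            using False unfolding pw by (simp add: s_def field_simps)
          show ?thesis
          proof (cases "poly h t = 0")
            case True
            then have "s = 0" using ssq by simp
            then have "s1 = 0" using False by (simp add: s_def)
            then show ?thesis using nz True refl by (simp add: zz ev_simp poly_monom)
          next
            case hnz: False
            show ?thesis
            proof (rule proj_eqI[where c="1 / t1 ^ (2 * d)"])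
              show "1 / t1 ^ (2 * d) \<noteq> 0" using False by simp
              have dd: "t1 ^ (d * 2) = t1 ^ d * t1 ^ d" by (simp add: mult_2_right power_add)
              have "t1 ^ d * (t1 ^ d * poly h t) / t1 ^ (2 * d) = poly h t"
                "(t1 ^ d)\<^sup>2 * (poly h t)\<^sup>2 / t1 ^ (2 * d) = (poly h t)\<^sup>2"
                using False by (simp_all add: power_mult[symmetric] power2_eq_square field_simps dd)
              then show "phi (chart2 H z) = (1 / t1 ^ (2 * d) * fst (ev (monom 1 d * reflect_poly h, 0) z, ev (0, monom 1 e) z, ev (reflect_poly h ^ 2, 0) z),
                 1 / t1 ^ (2 * d) * fst (snd (ev (monom 1 d * reflect_poly h, 0) z, ev (0, monom 1 e) z, ev (reflect_poly h ^ 2, 0) z)),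
                 1 / t1 ^ (2 * d) * snd (snd (ev (monom 1 d * reflect_poly h, 0) z, ev (0, monom 1 e) z, ev (reflect_poly h ^ 2, 0) z)))"
                using False by (simp add: zz ev_simp phi_def phiE_def ch hnz poly_monom refl s1s power_mult_distrib)
            qed (use nz in simp)
          qed
        qed
      qed
      show ?thesis using onE rep by blast
    qed
  qed
  obtain t0 where t0: "poly h t0 = 0" using root_exists[of h] assms(6) by auto
  define s0 where "s0 = csqrt (poly (hyp_H2 H) 0)"
  have P1: "Inl (0, t0) \<in> Cpts H" using t0 Hpoly by (simp add: Cpts_def aff_curve_def)
  have P2: "Inr s0 \<in> Cpts H" by (simp add: Cpts_def s0_def)
  have "\<not> proj_eq (phi (Inl (0, t0))) (phi (Inr s0))"
    using t0 hne by (simp add: phi_def phiE_def proj_eq_def)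
  then have "nonconstant_on (Cpts H) phi" unfolding nonconstant_on_def using P1 P2 by blast
  then show ?thesis using morph by blast
qed

end
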